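(* Let $m\ge1$, $n=2m$, $s=2^m-1$, $t=2^m+1$. Let $\alpha$ be a generator of $\mathbb{F}_{2^n}^\times$, $\beta=\alpha^t$ (a generator of $\mathbb{F}_{2^m}^\times$) and $\gamma=\alpha^s$ (an element of order $2^m+1$), and let $B_{i,j}=\mathrm{tr}_{\mathbb{F}_{2^n}/\mathbb{F}_2}(\beta^i\gamma^j)$ for $(i,j)\in\mathbb{Z}_s\times\mathbb{Z}_t$ (the trace De Bruijn torus), whose $j$-th column is $(B_{i,j})_{0\le i<s}$. Then for each integer $i$, the shifted sequence $\mathsf{DB}_\beta^{[i]}$ appears as a column of $B$ if and only if the polynomial $x^2+\beta^i x+1$ is irreducible over $\mathbb{F}_{2^m}$. Moreover, such a column occurs with multiplicity two, corresponding to the two indices $j$ and $-j\in\mathbb{Z}/t\mathbb{Z}$ satisfying $\mathrm{tr}_{\mathbb{F}_{2^n}/\mathbb{F}_{2^m}}(\gamma^j)=\beta^i$.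
   Context: $\mathrm{tr}_{K/F}$ denotes the field trace. $\mathsf{DB}_\beta=(\mathrm{tr}_{\mathbb{F}_{2^m}/\mathbb{F}_2}(\beta^k))_{0\le k<s}$ is the standard trace De Bruijn sequence, and $\mathsf{DB}_\beta^{[i]}=(\mathrm{tr}_{\mathbb{F}_{2^m}/\mathbb{F}_2}(\beta^{i+k}))_{0\le k<s}$ its cyclic shift by $i$ (indices mod $s$). *)

theory Defs
  imports "HOL-Algebra.Algebra"
begin

definition abs_trace :: "('a, 'b) ring_scheme \<Rightarrow> nat \<Rightarrow> 'a \<Rightarrow> 'a" where
  "abs_trace R d x = (\<Oplus>\<^bsub>R\<^esub> k \<in> {..<d}. x [^]\<^bsub>R\<^esub> ((2::nat) ^ k))"

definition rel_trace :: "('a, 'b) ring_scheme \<Rightarrow> nat \<Rightarrow> 'a \<Rightarrow> 'a" where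
  "rel_trace R m x = x \<oplus>\<^bsub>R\<^esub> x [^]\<^bsub>R\<^esub> ((2::nat) ^ m)"

definition subfield_pow :: "('a, 'b) ring_scheme \<Rightarrow> nat \<Rightarrow> 'a set" where
  "subfield_pow R m = {x \<in> carrier R. x [^]\<^bsub>R\<^esub> ((2::nat) ^ m) = x}"

definition mult_generator :: "('a, 'b) ring_scheme \<Rightarrow> 'a \<Rightarrow> bool" where
  "mult_generator R a \<longleftrightarrow> a \<in> carrier R - {\<zero>\<^bsub>R\<^esub>} \<and>
     (\<forall>x \<in> carrier R - {\<zero>\<^bsub>R\<^esub>}. \<exists>k::nat. x = a [^]\<^bsub>R\<^esub> k)"

definition torus_column :: "('a, 'b) ring_scheme \<Rightarrow> nat \<Rightarrow> 'a \<Rightarrow> 'a \<Rightarrow> nat \<Rightarrow> nat \<Rightarrow> 'a" where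
  "torus_column R n \<beta> \<gamma> j k = abs_trace R n (\<beta> [^]\<^bsub>R\<^esub> k \<otimes>\<^bsub>R\<^esub> \<gamma> [^]\<^bsub>R\<^esub> j)"

definition DB_shift :: "('a, 'b) ring_scheme \<Rightarrow> nat \<Rightarrow> 'a \<Rightarrow> int \<Rightarrow> nat \<Rightarrow> 'a" where
  "DB_shift R m \<beta> i k = abs_trace R m (\<beta> [^]\<^bsub>R\<^esub> (i + int k))"

end

theory Submission imports Defs "HOL-Algebra.Multiplicative_Group" begin

lemma card_fib2:
  assumes fin: "finite A" and fib: "\<And>x y. x \<in> A \<Longrightarrow> y \<in> A \<Longrightarrow> f x = f y \<Longrightarrow> y = x \<or> y = g x"
  shows "card A \<le> 2 * card (f ` A)"
proof -
  have A: "A = (\<Union>z\<in>f ` A. {x\<in>A. f x = z})" by auto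
  have "card A \<le> (\<Sum>z\<in>f ` A. card {x\<in>A. f x = z})"
    by (subst A) (rule card_UN_le, simp add: fin)
  also have "\<dots> \<le> of_nat (card (f ` A)) * 2"
  proof (rule sum_bounded_above)
    fix z assume "z \<in> f ` A"
    then obtain x0 where x0: "x0 \<in> A" "z = f x0" by blast
    have ff: "\<And>x. x \<in> A \<Longrightarrow> f x = f x0 \<Longrightarrow> x = x0 \<or> x = g x0"
      using fib[OF x0(1)] by metis
    have "{x\<in>A. f x = z} \<subseteq> {x0, g x0}" using ff x0 by auto
    hence "card {x\<in>A. f x = z} \<le> card {x0, g x0}" by (rule card_mono[rotated]) simp
    also have "\<dots> \<le> 2" by (simp add: card_insert_le_m1)
    finally show "card {x\<in>A. f x = z} \<le> 2" .
  qed
  finally show ?thesis by simp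
qed

locale dbt = field R for R (structure) +
  fixes m :: nat and \<alpha> :: 'a
  assumes fin: "finite (carrier R)" and m1: "m \<ge> 1"
    and cardR: "card (carrier R) = 2 ^ (2*m)"
    and gen: "mult_generator R \<alpha>"
begin

lemma pow_card: assumes x: "x \<in> carrier R" shows "x [^] ((2::nat) ^ (2*m)) = x"
proof (cases "x = \<zero>")
  case True thus ?thesis using m1 by (simp add: nat_pow_zero)
next
  case False
  interpret G: group "Multiplicative_Group.mult_of R" by (rule field_mult_group)
  have "x \<in> carrier (Multiplicative_Group.mult_of R)" using x False by (simp add: Multiplicative_Group.carrier_mult_of)
  hence "x [^]\<^bsub>Multiplicative_Group.mult_of R\<^esub> order (Multiplicative_Group.mult_of R) = \<one>\<^bsub>Multiplicative_Group.mult_of R\<^esub>" by (rule G.pow_order_eq_1)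
  hence 1: "x [^] ((2::nat) ^ (2*m) - 1) = \<one>"
    using fin cardR by (simp add: Multiplicative_Group.nat_pow_mult_of order_mult_of order_def)
  have "(2::nat) ^ (2*m) = Suc ((2::nat) ^ (2*m) - 1)" by simp
  hence "x [^] ((2::nat) ^ (2*m)) = x [^] ((2::nat) ^ (2*m) - 1) \<otimes> x"
    by (metis nat_pow_Suc)
  also have "\<dots> = \<one> \<otimes> x" by (simp only: 1)
  also have "\<dots> = x" using x by (rule l_one)
  finally show ?thesis .
qed

lemma char2: "\<one> \<oplus> \<one> = \<zero>"
proof -
  have a: "(\<ominus> \<one>) [^] ((2::nat) ^ (2*m)) = \<ominus> \<one>" by (rule pow_card) simp
  have b: "(\<ominus> \<one>) \<otimes> (\<ominus> \<one>) = \<one>" by algebra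
  have e: "2*m = Suc (2*m - 1)" using m1 by simp
  have "(2::nat) ^ (2*m) = 2 * (2 ^ (2*m - 1))" by (subst e) (simp only: power_Suc)
  hence "(\<ominus> \<one>) [^] ((2::nat) ^ (2*m)) = ((\<ominus> \<one>) [^] (2::nat)) [^] ((2::nat) ^ (2*m - 1))"
    by (simp add: nat_pow_pow)
  also have "(\<ominus> \<one>) [^] (2::nat) = \<one>" using b by (simp add: numeral_2_eq_2)
  finally have "\<ominus> \<one> = \<one>" using a by simp
  thus ?thesis by (metis one_closed r_neg)
qed

lemma add_self [simp]: "x \<in> carrier R \<Longrightarrow> x \<oplus> x = \<zero>"
proof -
  assume x: "x \<in> carrier R"
  have "x \<oplus> x = (\<one> \<oplus> \<one>) \<otimes> x" using x by algebra
  thus ?thesis using char2 x by simp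
qed

lemma neg_self [simp]: "x \<in> carrier R \<Longrightarrow> \<ominus> x = x"
  by (metis add_self minus_equality)

lemma add_eq_zero_iff: "x \<in> carrier R \<Longrightarrow> y \<in> carrier R \<Longrightarrow> x \<oplus> y = \<zero> \<longleftrightarrow> x = y"
  by (metis add_self minus_equality neg_self)

lemma frob2: "x \<in> carrier R \<Longrightarrow> y \<in> carrier R \<Longrightarrow> (x \<oplus> y) [^] (2::nat) = x [^] (2::nat) \<oplus> y [^] (2::nat)"
proof -
  assume x: "x \<in> carrier R" and y: "y \<in> carrier R"
  have "(x \<oplus> y) \<otimes> (x \<oplus> y) = x \<otimes> x \<oplus> y \<otimes> y \<oplus> (x \<otimes> y \<oplus> x \<otimes> y)"
    using x y by algebra
  hence "(x \<oplus> y) [^] (2::nat) = x [^] (2::nat) \<oplus> y [^] (2::nat) \<oplus> (x \<otimes> y \<oplus> x \<otimes> y)"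
    using x y by (simp add: numeral_2_eq_2)
  thus ?thesis using x y by simp
qed

lemma frob: "x \<in> carrier R \<Longrightarrow> y \<in> carrier R \<Longrightarrow> (x \<oplus> y) [^] ((2::nat)^k) = x [^] ((2::nat)^k) \<oplus> y [^] ((2::nat)^k)"
proof (induction k)
  case 0 thus ?case by simp
next
  case (Suc k)
  have e: "(2::nat) ^ Suc k = 2^k * 2" by simp
  show ?case using Suc by (simp only: e nat_pow_pow[symmetric] add.m_closed nat_pow_closed frob2)
qed

definition "q = (2::nat) ^ m"
definition "s = q - 1"
definition "t = q + 1"
definition "NN = (2::nat) ^ (2*m) - 1"

lemma q_ge2: "q \<ge> 2"
proof -
  have "(2::nat) ^ 1 \<le> 2 ^ m" using m1 by (rule power_increasing) simp
  thus ?thesis by (simp add: q_def)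
qed

lemma s_pos: "s > 0" using q_ge2 by (simp add: s_def)
lemma q_s: "q = s + 1" using q_ge2 by (simp add: s_def)
lemma t_s: "t = s + 2" using q_ge2 by (simp add: s_def t_def)
lemma q_even: "even q" using m1 by (simp add: q_def)
lemma s_odd: "odd s" using q_even q_s by simp
lemma t_odd: "odd t" using q_even by (simp add: t_def)
lemma NN_st: "NN = s * t"
proof -
  have "(2::nat) ^ (2*m) = q * q" unfolding q_def by (metis power_mult mult.commute power2_eq_square)
  thus ?thesis unfolding NN_def t_def s_def using q_ge2 by (simp add: algebra_simps)
qed
lemma NN_pos: "NN > 0" using NN_st s_pos t_s by simp

lemma alpha_in: "\<alpha> \<in> carrier R" "\<alpha> \<noteq> \<zero>"
  using gen unfolding mult_generator_def by auto

lemma alpha_gen: "x \<in> carrier R \<Longrightarrow> x \<noteq> \<zero> \<Longrightarrow> \<exists>k::nat. x = \<alpha> [^] k"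
  using gen unfolding mult_generator_def by auto

lemma pow_nonzero: "x \<in> carrier R \<Longrightarrow> x \<noteq> \<zero> \<Longrightarrow> x [^] (k::nat) \<noteq> \<zero>"
  by (induction k) (auto simp: integral_iff)

lemma pow_mod: assumes x: "x \<in> carrier R" and d: "x [^] (d::nat) = \<one>"
  shows "x [^] (a::nat) = x [^] (a mod d)"
proof -
  have "x [^] a = x [^] (d * (a div d) + a mod d)" by simp
  also have "\<dots> = x [^] (d * (a div d)) \<otimes> x [^] (a mod d)"
    using x by (rule nat_pow_mult[symmetric])
  also have "x [^] (d * (a div d)) = (x [^] d) [^] (a div d)"
    using x by (rule nat_pow_pow[symmetric])
  hence "x [^] (d * (a div d)) = \<one>" using d by simp
  finally show ?thesis using x by simp
qed

lemma pow_cancel: assumes x: "x \<in> carrier R" "x \<noteq> \<zero>" and "x [^] (a::nat) = x [^] b" and "a \<le> b"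
  shows "x [^] (b - a) = \<one>"
proof -
  have "x [^] a \<otimes> x [^] (b - a) = x [^] (a + (b - a))"
    using assms(1) by (rule nat_pow_mult)
  also have "a + (b - a) = b" using assms(4) by simp
  also have "x [^] b = x [^] a \<otimes> \<one>" using assms by simp
  finally have "x [^] a \<otimes> x [^] (b - a) = x [^] a \<otimes> \<one>" .
  thus ?thesis using m_lcancel[OF pow_nonzero[OF x] nat_pow_closed[OF x(1)] nat_pow_closed[OF x(1)] one_closed] by simp
qed

lemma alpha_NN: "\<alpha> [^] NN = \<one>"
proof -
  have a: "\<alpha> [^] ((2::nat)^(2*m)) = \<alpha>" using pow_card alpha_in by simp
  have e: "(2::nat)^(2*m) = Suc ((2::nat)^(2*m) - 1)" by simp
  have "\<alpha> [^] ((2::nat)^(2*m)) = \<alpha> [^] ((2::nat)^(2*m) - 1) \<otimes> \<alpha>"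
    by (subst e, rule nat_pow_Suc)
  hence "\<alpha> [^] ((2::nat)^(2*m) - 1) \<otimes> \<alpha> = \<alpha>" using a by simp
  hence "\<alpha> [^] ((2::nat)^(2*m) - 1) \<otimes> \<alpha> = \<one> \<otimes> \<alpha>"
    using alpha_in by simp
  hence "\<alpha> [^] ((2::nat)^(2*m) - 1) = \<one>" using m_rcancel[OF alpha_in(2) alpha_in(1) nat_pow_closed[OF alpha_in(1)] one_closed] by simp
  thus ?thesis by (simp add: NN_def)
qed

lemma card_nonzero: "card (carrier R - {\<zero>}) = NN"
  using fin cardR by (simp add: NN_def card_Diff_singleton)

lemma alpha_min: assumes "0 < d" "d < NN" shows "\<alpha> [^] d \<noteq> \<one>"
proof
  assume d1: "\<alpha> [^] d = \<one>"
  have "carrier R - {\<zero>} \<subseteq> (\<lambda>k. \<alpha> [^] k) ` {..<d}"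
  proof
    fix x assume "x \<in> carrier R - {\<zero>}"
    hence xc: "x \<in> carrier R" "x \<noteq> \<zero>" by auto
    from alpha_gen[OF xc] obtain k :: nat where k: "x = \<alpha> [^] k" ..
    hence "x = \<alpha> [^] (k mod d)" using pow_mod[OF alpha_in(1) d1, of k] by simp
    moreover have "k mod d \<in> {..<d}" using assms(1) by simp
    ultimately show "x \<in> (\<lambda>k. \<alpha> [^] k) ` {..<d}" by (rule image_eqI)
  qed
  hence "card (carrier R - {\<zero>}) \<le> card ((\<lambda>k. \<alpha> [^] k) ` {..<d})" by (rule card_mono[rotated]) simp
  also have "\<dots> \<le> d" using card_image_le[of "{..<d}"] by simp
  finally show False using card_nonzero assms by simp
qed

lemma alpha_eq: "\<alpha> [^] (a::nat) = \<alpha> [^] (b::nat) \<longleftrightarrow> a mod NN = b mod NN"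
proof
  assume "a mod NN = b mod NN"
  moreover have "\<alpha> [^] a = \<alpha> [^] (a mod NN)" by (rule pow_mod[OF alpha_in(1) alpha_NN])
  moreover have "\<alpha> [^] b = \<alpha> [^] (b mod NN)" by (rule pow_mod[OF alpha_in(1) alpha_NN])
  ultimately show "\<alpha> [^] a = \<alpha> [^] b" by simp
next
  assume h: "\<alpha> [^] a = \<alpha> [^] b"
  have "\<alpha> [^] a = \<alpha> [^] (a mod NN)" by (rule pow_mod[OF alpha_in(1) alpha_NN])
  moreover have "\<alpha> [^] b = \<alpha> [^] (b mod NN)" by (rule pow_mod[OF alpha_in(1) alpha_NN])
  ultimately have h2: "\<alpha> [^] (a mod NN) = \<alpha> [^] (b mod NN)" using h by simp
  show "a mod NN = b mod NN"
  proof (rule ccontr)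
    assume ne: "a mod NN \<noteq> b mod NN"
    have lt: "a mod NN < NN" "b mod NN < NN" using NN_pos by auto
    show False
    proof (cases "a mod NN < b mod NN")
      case True
      have "\<alpha> [^] (b mod NN - a mod NN) = \<one>" using pow_cancel[OF alpha_in h2] True by simp
      thus False using alpha_min[of "b mod NN - a mod NN"] True lt by simp
    next
      case False
      hence F: "b mod NN < a mod NN" using ne by simp
      have "\<alpha> [^] (a mod NN - b mod NN) = \<one>" using pow_cancel[OF alpha_in h2[symmetric]] F by simp
      thus False using alpha_min[of "a mod NN - b mod NN"] F lt by simp
    qed
  qed
qed


definition "beta = \<alpha> [^] t"
definition "gamma = \<alpha> [^] s"
definition "K = subfield_pow R m"

lemma beta_in: "beta \<in> carrier R" "beta \<noteq> \<zero>"
  unfolding beta_def using alpha_in pow_nonzero by auto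
lemma gamma_in: "gamma \<in> carrier R" "gamma \<noteq> \<zero>"
  unfolding gamma_def using alpha_in pow_nonzero by auto

lemma beta_eq: "beta [^] (a::nat) = beta [^] (b::nat) \<longleftrightarrow> a mod s = b mod s"
proof -
  have "beta [^] a = beta [^] b \<longleftrightarrow> \<alpha> [^] (t * a) = \<alpha> [^] (t * b)"
    unfolding beta_def using alpha_in by (simp add: nat_pow_pow)
  also have "\<dots> \<longleftrightarrow> (t * a) mod (t * s) = (t * b) mod (t * s)"
    by (simp add: alpha_eq NN_st mult.commute)
  also have "\<dots> \<longleftrightarrow> t * (a mod s) = t * (b mod s)" by (simp only: mod_mult_mult1)
  also have "\<dots> \<longleftrightarrow> a mod s = b mod s" using t_s by (simp only: mult_cancel_left) simp
  finally show ?thesis .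
qed

lemma gamma_eq: "gamma [^] (a::nat) = gamma [^] (b::nat) \<longleftrightarrow> a mod t = b mod t"
proof -
  have "gamma [^] a = gamma [^] b \<longleftrightarrow> \<alpha> [^] (s * a) = \<alpha> [^] (s * b)"
    unfolding gamma_def using alpha_in by (simp add: nat_pow_pow)
  also have "\<dots> \<longleftrightarrow> (s * a) mod (s * t) = (s * b) mod (s * t)"
    by (simp add: alpha_eq NN_st)
  also have "\<dots> \<longleftrightarrow> a mod t = b mod t" using s_pos by (simp add: mod_mult_mult1)
  finally show ?thesis .
qed

lemma beta_s: "beta [^] s = \<one>"
  using beta_eq[of s 0] by simp
lemma gamma_t: "gamma [^] t = \<one>"
  using gamma_eq[of t 0] by simp

lemma K_def2: "K = {x \<in> carrier R. x [^] q = x}"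
  unfolding K_def subfield_pow_def q_def ..

lemma beta_pow_q: "(beta [^] (a::nat)) [^] q = beta [^] a"
proof -
  have "(beta [^] a) [^] q = beta [^] (a * q)" using beta_in by (simp add: nat_pow_pow)
  also have "\<dots> = beta [^] a" unfolding beta_eq q_s by (simp add: algebra_simps)
  finally show ?thesis .
qed

lemma beta_K: "beta [^] (a::nat) \<in> K"
  unfolding K_def2 using beta_pow_q beta_in by simp

lemma sq_one: assumes w: "w \<in> carrier R" and "w \<otimes> w = \<one>" shows "w = \<one>"
proof -
  have "(w \<oplus> \<one>) \<otimes> (w \<oplus> \<one>) = w \<otimes> w \<oplus> \<one> \<oplus> (w \<oplus> w)" using w by algebra
  also have "\<dots> = \<zero>" using w assms(2) by simp
  finally have "w \<oplus> \<one> = \<zero>" using w by (simp add: integral_iff)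
  thus ?thesis using add_eq_zero_iff w by simp
qed

lemma pow_q_s: assumes x: "x \<in> carrier R" "x \<noteq> \<zero>" and xq: "x [^] q = x" shows "x [^] s = \<one>"
proof -
  have "x [^] (1::nat) = x [^] q" using x xq by simp
  from pow_cancel[OF x this] q_ge2 show ?thesis by (simp add: s_def)
qed

lemma K_beta: assumes "x \<in> K" "x \<noteq> \<zero>" shows "\<exists>a<s. x = beta [^] a"
proof -
  have x: "x \<in> carrier R" "x [^] q = x" using assms(1) unfolding K_def2 by auto
  from alpha_gen[OF x(1) assms(2)] obtain k :: nat where k: "x = \<alpha> [^] k" ..
  have "x [^] s = \<one>" using pow_q_s x assms(2) by simp
  hence "\<alpha> [^] (k * s) = \<alpha> [^] (0::nat)" using k alpha_in by (simp add: nat_pow_pow)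
  hence "(k * s) mod (s * t) = 0" unfolding alpha_eq NN_st by simp
  hence "s * t dvd k * s" by (simp add: mod_eq_0_iff_dvd)
  hence "t dvd k" using s_pos by (simp add: mult.commute)
  then obtain a where a: "k = t * a" by (elim dvdE)
  have "x = beta [^] a" unfolding k a beta_def using alpha_in by (simp add: nat_pow_pow)
  also have "\<dots> = beta [^] (a mod s)" unfolding beta_eq by simp
  finally show ?thesis using s_pos by (intro exI[of _ "a mod s"]) simp
qed

lemma gamma_pow_q: "(gamma [^] (j::nat)) [^] q \<otimes> gamma [^] j = \<one>"
proof -
  have "(gamma [^] j) [^] q \<otimes> gamma [^] j = gamma [^] (j * q + j)"
    using gamma_in by (simp add: nat_pow_pow nat_pow_mult)
  also have "j * q + j = t * j" by (simp add: t_def algebra_simps)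
  also have "gamma [^] (t * j) = (gamma [^] t) [^] j" using gamma_in by (simp add: nat_pow_pow)
  finally show ?thesis by (simp add: gamma_t)
qed

lemma gamma_K: assumes "gamma [^] (j::nat) \<in> K" shows "gamma [^] j = \<one>"
proof -
  have "(gamma [^] j) [^] q = gamma [^] j" using assms unfolding K_def2 by simp
  hence "gamma [^] j \<otimes> gamma [^] j = \<one>" using gamma_pow_q[of j] by simp
  thus ?thesis by (rule sq_one[rotated]) (simp add: gamma_in)
qed

lemma K_sub: "K \<subseteq> carrier R" unfolding K_def2 by auto

lemma K_subfield: "subfield K R"
proof (rule subfieldI')
  show "subring K R"
  proof (rule subringI)
    show "K \<subseteq> carrier R" by (rule K_sub)
    show "\<one> \<in> K" unfolding K_def2 by simp
    show "\<ominus> h \<in> K" if "h \<in> K" for h using that K_sub by auto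
    show "h1 \<otimes> h2 \<in> K" if "h1 \<in> K" "h2 \<in> K" for h1 h2
      using that unfolding K_def2 by (simp add: nat_pow_distrib)
    show "h1 \<oplus> h2 \<in> K" if "h1 \<in> K" "h2 \<in> K" for h1 h2
      using that frob[of h1 h2 m] unfolding K_def2 q_def by simp
  qed
next
  fix k assume k: "k \<in> K - {\<zero>}"
  hence kc: "k \<in> carrier R" "k \<noteq> \<zero>" "k [^] q = k" unfolding K_def2 by auto
  hence u: "k \<in> Units R" using field_Units by simp
  have ic: "inv k \<in> carrier R" using u by simp
  have "(inv k) [^] q \<otimes> k = (inv k) [^] q \<otimes> k [^] q" using kc by simp
  also have "\<dots> = (inv k \<otimes> k) [^] q" using ic kc by (simp add: nat_pow_distrib)
  also have "\<dots> = inv k \<otimes> k" using u by simp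
  finally have "(inv k) [^] q = inv k"
    using m_rcancel[OF kc(2) kc(1) nat_pow_closed[OF ic] ic] by simp
  thus "inv k \<in> K" unfolding K_def2 using ic by simp
qed


lemma fs_Suc: fixes f :: "nat \<Rightarrow> 'a" shows "f \<in> UNIV \<rightarrow> carrier R \<Longrightarrow> finsum R f {..<Suc n} = f n \<oplus> finsum R f {..<n}"
  by (simp add: lessThan_Suc finsum_insert Pi_def)

lemma fs_split: fixes f :: "nat \<Rightarrow> 'a" and a b :: nat assumes f: "f \<in> UNIV \<rightarrow> carrier R"
  shows "finsum R f {..<a+b} = finsum R f {..<a} \<oplus> finsum R (\<lambda>l. f (a+l)) {..<b}"
proof (induction b)
  case 0 thus ?case using f by (simp add: Pi_def)
next
  case (Suc b)
  have f2: "(\<lambda>l. f (a+l)) \<in> UNIV \<rightarrow> carrier R" using f by (simp add: Pi_def)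
  have "finsum R f {..<a + Suc b} = f (a+b) \<oplus> finsum R f {..<a+b}"
    using fs_Suc[OF f, of "a+b"] by simp
  also have "\<dots> = f (a+b) \<oplus> (finsum R f {..<a} \<oplus> finsum R (\<lambda>l. f (a+l)) {..<b})" using Suc by simp
  also have "\<dots> = finsum R f {..<a} \<oplus> (f (a+b) \<oplus> finsum R (\<lambda>l. f (a+l)) {..<b})"
    using f f2 by (simp add: Pi_def a_lcomm)
  also have "f (a+b) \<oplus> finsum R (\<lambda>l. f (a+l)) {..<b} = finsum R (\<lambda>l. f (a+l)) {..<Suc b}"
    using fs_Suc[OF f2, of b] by simp
  finally show ?case .
qed

lemma fs_swap: fixes g :: "nat \<Rightarrow> nat \<Rightarrow> 'a" and a b :: nat assumes g: "\<And>k l. g k l \<in> carrier R"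
  shows "finsum R (\<lambda>k. finsum R (\<lambda>l. g k l) {..<b}) {..<a} = finsum R (\<lambda>l. finsum R (\<lambda>k. g k l) {..<a}) {..<b}"
proof (induction a)
  case 0 thus ?case by (simp add: finsum_zero)
next
  case (Suc a)
  have "finsum R (\<lambda>k. finsum R (\<lambda>l. g k l) {..<b}) {..<Suc a}
     = finsum R (\<lambda>l. g a l) {..<b} \<oplus> finsum R (\<lambda>k. finsum R (\<lambda>l. g k l) {..<b}) {..<a}"
    by (rule fs_Suc) (simp add: Pi_def g)
  also have "\<dots> = finsum R (\<lambda>l. g a l) {..<b} \<oplus> finsum R (\<lambda>l. finsum R (\<lambda>k. g k l) {..<a}) {..<b}"
    using Suc by simp
  also have "\<dots> = finsum R (\<lambda>l. g a l \<oplus> finsum R (\<lambda>k. g k l) {..<a}) {..<b}"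
    by (rule finsum_addf[symmetric]) (simp_all add: Pi_def g)
  also have "\<dots> = finsum R (\<lambda>l. finsum R (\<lambda>k. g k l) {..<Suc a}) {..<b}"
    by (rule finsum_cong') (simp_all add: Pi_def g fs_Suc)
  finally show ?case .
qed

lemma tr_closed: "x \<in> carrier R \<Longrightarrow> abs_trace R d x \<in> carrier R"
  unfolding abs_trace_def by (simp add: Pi_def)

lemma tr_add: assumes "x \<in> carrier R" "y \<in> carrier R"
  shows "abs_trace R d (x \<oplus> y) = abs_trace R d x \<oplus> abs_trace R d y"
proof -
  have "abs_trace R d (x \<oplus> y) = (\<Oplus>k\<in>{..<d}. x [^] ((2::nat)^k) \<oplus> y [^] ((2::nat)^k))"
    unfolding abs_trace_def by (rule finsum_cong') (simp_all add: Pi_def assms frob)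
  also have "\<dots> = abs_trace R d x \<oplus> abs_trace R d y"
    unfolding abs_trace_def by (rule finsum_addf) (simp_all add: Pi_def assms)
  finally show ?thesis .
qed

lemma tr_split: assumes x: "x \<in> carrier R"
  shows "abs_trace R (2*m) x = abs_trace R m (x \<oplus> x [^] q)"
proof -
  have "abs_trace R m (x \<oplus> x [^] q) = (\<Oplus>k\<in>{..<m}. x [^] ((2::nat)^k) \<oplus> x [^] ((2::nat)^(m+k)))"
    unfolding abs_trace_def
  proof (rule finsum_cong')
    fix k assume "k \<in> {..<m}"
    have "(x [^] q) [^] ((2::nat)^k) = x [^] ((2::nat)^(m+k))"
      using x by (simp add: nat_pow_pow q_def power_add)
    thus "(x \<oplus> x [^] q) [^] ((2::nat)^k) = x [^] ((2::nat)^k) \<oplus> x [^] ((2::nat)^(m+k))"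
      using x by (simp add: frob)
  qed (simp_all add: Pi_def x)
  also have "\<dots> = abs_trace R m x \<oplus> (\<Oplus>k\<in>{..<m}. x [^] ((2::nat)^(m+k)))"
    unfolding abs_trace_def by (rule finsum_addf) (simp_all add: Pi_def x)
  also have "\<dots> = abs_trace R (m+m) x"
    unfolding abs_trace_def by (rule fs_split[symmetric]) (simp add: Pi_def x)
  finally show ?thesis by (simp add: mult_2)
qed

lemma col_eq: "torus_column R (2*m) beta gamma j k
   = abs_trace R m (beta [^] (k::nat) \<otimes> (gamma [^] (j::nat) \<oplus> (gamma [^] j) [^] q))"
proof -
  have bc: "beta [^] k \<in> carrier R" "gamma [^] j \<in> carrier R" using beta_in gamma_in by auto
  have "(beta [^] k \<otimes> gamma [^] j) [^] q = beta [^] k \<otimes> (gamma [^] j) [^] q"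
    using bc by (simp add: nat_pow_distrib beta_pow_q)
  thus ?thesis unfolding torus_column_def using bc by (simp add: tr_split r_distr)
qed

lemma ones_sum: "finsum R (\<lambda>k. \<one>) {..<(n::nat)} = (if even n then \<zero> else \<one>)"
proof (induction n)
  case 0 thus ?case by simp
next
  case (Suc n)
  have "finsum R (\<lambda>k. \<one>) {..<Suc n} = \<one> \<oplus> finsum R (\<lambda>k. \<one>) {..<n}"
    by (rule fs_Suc) (simp add: Pi_def)
  thus ?case using Suc char2 by simp
qed

lemma geo: assumes w: "w \<in> carrier R"
  shows "finsum R (\<lambda>k. w [^] k) {..<n} \<otimes> (w \<oplus> \<one>) = w [^] (n::nat) \<oplus> \<one>"
proof (induction n)
  case 0 thus ?case using char2 w by simp
next
  case (Suc n)
  let ?S = "finsum R (\<lambda>k. w [^] k) {..<n}"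
  have S: "?S \<in> carrier R" using w by (simp add: Pi_def)
  have "finsum R (\<lambda>k. w [^] k) {..<Suc n} = w [^] n \<oplus> ?S"
    by (rule fs_Suc) (simp add: Pi_def w)
  moreover have "(w [^] n \<oplus> ?S) \<otimes> (w \<oplus> \<one>) = w [^] n \<otimes> w \<oplus> w [^] n \<oplus> ?S \<otimes> (w \<oplus> \<one>)"
    using w S nat_pow_closed[OF w, of n] by algebra
  ultimately have "finsum R (\<lambda>k. w [^] k) {..<Suc n} \<otimes> (w \<oplus> \<one>) = w [^] n \<otimes> w \<oplus> w [^] n \<oplus> ?S \<otimes> (w \<oplus> \<one>)"
    by simp
  also have "\<dots> = w [^] n \<otimes> w \<oplus> w [^] n \<oplus> (w [^] n \<oplus> \<one>)" using Suc by simp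
  also have "\<dots> = w [^] n \<otimes> w \<oplus> (w [^] n \<oplus> w [^] n) \<oplus> \<one>" using w nat_pow_closed[OF w, of n] by algebra
  also have "\<dots> = w [^] Suc n \<oplus> \<one>" using w by simp
  finally show ?case .
qed

lemma geo0: assumes w: "w \<in> carrier R" and "w [^] (n::nat) = \<one>" and "w \<noteq> \<one>"
  shows "finsum R (\<lambda>k. w [^] k) {..<n} = \<zero>"
proof -
  have "finsum R (\<lambda>k. w [^] k) {..<n} \<otimes> (w \<oplus> \<one>) = \<zero>" using geo[OF w, of n] assms(2) char2 by simp
  moreover have "w \<oplus> \<one> \<noteq> \<zero>" using add_eq_zero_iff w assms(3) by simp
  ultimately show ?thesis using w by (simp add: integral_iff Pi_def)
qed


lemma w_ne1: assumes "1 \<le> l" "l < m" shows "beta [^] (s - 1 + 2^l) \<noteq> \<one>"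
proof
  assume "beta [^] (s - 1 + 2^l) = \<one>"
  hence "beta [^] (s - 1 + 2^l) = beta [^] (0::nat)" by simp
  hence h: "(s - 1 + 2^l) mod s = 0" unfolding beta_eq by simp
  have l2: "(2::nat) ^ 1 \<le> 2 ^ l" using assms(1) by (rule power_increasing) simp
  have l3: "(2::nat) ^ l < 2 ^ m" using assms(2) by simp
  have e: "s - 1 + 2^l = (2^l - 1) + s * 1" using s_pos l2 by simp
  have lt: "2^l - 1 < s" using l3 q_s s_pos unfolding q_def by linarith
  have "(2^l - 1) mod s = 2^l - 1" by (rule mod_less[OF lt])
  hence "(s - 1 + 2^l) mod s = 2^l - 1" unfolding e mod_mult_self2 .
  thus False using h l2 by simp
qed

lemma tr_nonzero: "\<exists>k<s. abs_trace R m (beta [^] k) \<noteq> \<zero>"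
proof (rule ccontr)
  assume "\<not> (\<exists>k<s. abs_trace R m (beta [^] k) \<noteq> \<zero>)"
  hence z: "\<And>k. k < s \<Longrightarrow> abs_trace R m (beta [^] k) = \<zero>" by auto
  define w where "w = (\<lambda>l::nat. beta [^] (s - 1 + 2^l))"
  have wc: "\<And>l. w l \<in> carrier R" unfolding w_def using beta_in by simp
  have bc: "\<And>a::nat. beta [^] a \<in> carrier R" using beta_in by simp
  have S0: "(\<Oplus>k\<in>{..<s}. beta [^] (k * (s - 1)) \<otimes> abs_trace R m (beta [^] k)) = \<zero>"
    by (rule add.finprod_one_eqI) (simp add: z bc)
  have S1: "(\<Oplus>k\<in>{..<s}. beta [^] (k * (s - 1)) \<otimes> abs_trace R m (beta [^] k))
      = (\<Oplus>k\<in>{..<s}. (\<Oplus>l\<in>{..<m}. w l [^] k))"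
  proof (rule finsum_cong')
    fix k :: nat assume "k \<in> {..<s}"
    have "beta [^] (k * (s - 1)) \<otimes> abs_trace R m (beta [^] k)
        = (\<Oplus>l\<in>{..<m}. beta [^] (k * (s - 1)) \<otimes> (beta [^] k) [^] ((2::nat)^l))"
      unfolding abs_trace_def by (rule finsum_rdistr) (simp_all add: bc Pi_def)
    also have "\<dots> = (\<Oplus>l\<in>{..<m}. w l [^] k)"
    proof (rule finsum_cong')
      fix l assume "l \<in> {..<m}"
      have "beta [^] (k * (s - 1)) \<otimes> (beta [^] k) [^] ((2::nat)^l) = beta [^] (k * (s - 1) + k * 2^l)"
        using beta_in by (simp add: nat_pow_pow nat_pow_mult)
      also have "k * (s - 1) + k * 2^l = (s - 1 + 2^l) * k" by (simp add: algebra_simps)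
      also have "beta [^] ((s - 1 + 2^l) * k) = w l [^] k" unfolding w_def using beta_in by (simp add: nat_pow_pow)
      finally show "beta [^] (k * (s - 1)) \<otimes> (beta [^] k) [^] ((2::nat)^l) = w l [^] k" .
    qed (simp_all add: Pi_def wc)
    finally show "beta [^] (k * (s - 1)) \<otimes> abs_trace R m (beta [^] k) = (\<Oplus>l\<in>{..<m}. w l [^] k)" .
  qed (simp_all add: Pi_def wc)
  also have "\<dots> = (\<Oplus>l\<in>{..<m}. (\<Oplus>k\<in>{..<s}. w l [^] k))"
    by (rule fs_swap) (simp add: wc)
  also have "\<dots> = (\<Oplus>l\<in>{..<m}. (if 0 = l then \<one> else \<zero>))"
  proof (rule finsum_cong')
    fix l assume l: "l \<in> {..<m}"
    show "(\<Oplus>k\<in>{..<s}. w l [^] k) = (if 0 = l then \<one> else \<zero>)"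
    proof (cases "l = 0")
      case True
      have "w l = \<one>" unfolding w_def True using s_pos beta_s by simp
      thus ?thesis using True ones_sum[of s] s_odd by simp
    next
      case False
      have "w l [^] s = (beta [^] s) [^] (s - 1 + 2^l)" unfolding w_def using beta_in
        by (simp add: nat_pow_pow mult.commute)
      hence ws: "w l [^] s = \<one>" using beta_s by simp
      have "w l \<noteq> \<one>" unfolding w_def using w_ne1[of l] False l by simp
      thus ?thesis using geo0[OF wc ws] False by simp
    qed
  qed (simp_all add: Pi_def)
  also have "\<dots> = \<one>"
    using add.finprod_singleton[of 0 "{..<m}" "\<lambda>l. \<one>"] m1 by simp
  finally show False using S0 by simp
qed


definition "T j = gamma [^] (j::nat) \<oplus> (gamma [^] j) [^] q"

lemma T_closed: "T j \<in> carrier R" unfolding T_def using gamma_in by simp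

lemma pow_qq: "x \<in> carrier R \<Longrightarrow> (x [^] q) [^] q = x"
proof -
  assume x: "x \<in> carrier R"
  have "q * q = (2::nat) ^ (2*m)" unfolding q_def by (metis power_mult mult.commute power2_eq_square)
  thus ?thesis using x pow_card by (simp add: nat_pow_pow)
qed

lemma T_K: "T j \<in> K"
proof -
  have g: "gamma [^] j \<in> carrier R" using gamma_in by simp
  have "(T j) [^] q = (gamma [^] j) [^] q \<oplus> gamma [^] j"
    unfolding T_def using frob[of "gamma [^] j" "(gamma [^] j) [^] q" m] g pow_qq[OF g] by (simp add: q_def)
  also have "\<dots> = T j" unfolding T_def using g by (simp add: a_comm)
  finally show ?thesis unfolding K_def2 using T_closed by simp
qed

lemma K_add: "x \<in> K \<Longrightarrow> y \<in> K \<Longrightarrow> x \<oplus> y \<in> K"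
  using subringE(7)[OF subfieldE(1)[OF K_subfield]] by blast

lemma col_iff: assumes c: "c \<in> K"
  shows "(\<forall>k<s. torus_column R (2*m) beta gamma j k = abs_trace R m (beta [^] k \<otimes> c)) \<longleftrightarrow> T j = c"
proof
  assume "T j = c"
  thus "\<forall>k<s. torus_column R (2*m) beta gamma j k = abs_trace R m (beta [^] k \<otimes> c)"
    unfolding col_eq T_def by simp
next
  assume h: "\<forall>k<s. torus_column R (2*m) beta gamma j k = abs_trace R m (beta [^] k \<otimes> c)"
  have cc: "c \<in> carrier R" using c K_sub by auto
  define d where "d = T j \<oplus> c"
  have dK: "d \<in> K" unfolding d_def using K_add T_K c by simp
  have dc: "d \<in> carrier R" using dK K_sub by auto
  have bc: "\<And>a::nat. beta [^] a \<in> carrier R" using beta_in by simp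
  have z: "abs_trace R m (beta [^] k \<otimes> d) = \<zero>" if "k < s" for k
  proof -
    have "abs_trace R m (beta [^] k \<otimes> d) = abs_trace R m (beta [^] k \<otimes> T j) \<oplus> abs_trace R m (beta [^] k \<otimes> c)"
      unfolding d_def using bc cc T_closed by (simp add: r_distr tr_add)
    also have "abs_trace R m (beta [^] k \<otimes> T j) = abs_trace R m (beta [^] k \<otimes> c)"
      using h that unfolding col_eq T_def by simp
    finally show ?thesis using bc cc by (simp add: tr_closed)
  qed
  show "T j = c"
  proof (rule ccontr)
    assume "T j \<noteq> c"
    hence "d \<noteq> \<zero>" unfolding d_def using add_eq_zero_iff T_closed cc by simp
    then obtain a where a: "a < s" "d = beta [^] a" using K_beta dK by blast
    obtain k0 where k0: "k0 < s" "abs_trace R m (beta [^] k0) \<noteq> \<zero>" using tr_nonzero by blast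
    define k where "k = (k0 + s - a) mod s"
    have ks: "k < s" unfolding k_def using s_pos by simp
    have "beta [^] k \<otimes> d = beta [^] (k + a)" unfolding a(2) using beta_in by (simp add: nat_pow_mult)
    also have "\<dots> = beta [^] k0" unfolding beta_eq k_def using a(1) k0(1)
      by (simp add: mod_add_left_eq)
    finally show False using z[OF ks] k0(2) by simp
  qed
qed

lemma int_pow_red: assumes x: "x \<in> carrier R" and xs: "x [^] s = \<one>"
  shows "x [^] (z::int) = x [^] (nat (z mod int s))"
proof (cases "z < 0")
  case False
  hence "x [^] z = x [^] (nat z)" by (simp only: int_pow_def2 if_False)
  also have "\<dots> = x [^] (nat z mod s)" by (rule pow_mod[OF x xs])
  also have "nat z mod s = nat (z mod int s)" using False by (simp add: nat_mod_distrib)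
  finally show ?thesis .
next
  case True
  define a where "a = nat (- z)"
  define b where "b = nat (z mod int s)"
  have "int (a + b) = - z + z mod int s" unfolding a_def b_def using True s_pos by simp
  hence "int (a + b) mod int s = (z mod int s - z) mod int s" by simp
  also have "\<dots> = (z - z) mod int s" by (rule mod_diff_left_eq)
  finally have "int (a + b) mod int s = 0" by simp
  hence "int ((a + b) mod s) = 0" by (simp only: of_nat_mod)
  hence "(a + b) mod s = 0" by simp
  moreover have "x [^] (a + b) = x [^] ((a + b) mod s)" by (rule pow_mod[OF x xs])
  ultimately have "x [^] (a + b) = \<one>" by simp
  hence "x [^] a \<otimes> x [^] b = \<one>" using x by (simp add: nat_pow_mult)
  hence "inv (x [^] a) = x [^] b" by (intro comm_inv_char) (simp_all add: x)
  moreover have "x [^] z = inv (x [^] (nat (- z)))" using True by (simp only: int_pow_def2 if_True)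
  ultimately show ?thesis unfolding a_def b_def by simp
qed


definition "psi x = x \<oplus> inv x"

lemma inv_facts: "x \<in> carrier R \<Longrightarrow> x \<noteq> \<zero> \<Longrightarrow> inv x \<in> carrier R \<and> x \<otimes> inv x = \<one> \<and> inv x \<otimes> x = \<one> \<and> inv x \<noteq> \<zero>"
proof -
  assume x: "x \<in> carrier R" "x \<noteq> \<zero>"
  hence u: "x \<in> Units R" using field_Units by simp
  hence "inv x \<in> carrier R" "x \<otimes> inv x = \<one>" "inv x \<otimes> x = \<one>" by simp_all
  moreover have "inv x \<noteq> \<zero>"
  proof
    assume "inv x = \<zero>"
    hence "inv x \<otimes> x = \<zero>" using x by simp
    thus False using calculation by simp
  qed
  ultimately show ?thesis by simp
qed

lemma psi_fib: assumes v: "v \<in> carrier R" "v \<noteq> \<zero>" and w: "w \<in> carrier R" "w \<noteq> \<zero>"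
  and h: "psi v = psi w" shows "v = w \<or> v = inv w"
proof -
  define a where "a = inv v"
  define b where "b = inv w"
  have a: "a \<in> carrier R" "v \<otimes> a = \<one>" using inv_facts[OF v] unfolding a_def by auto
  have b: "b \<in> carrier R" "w \<otimes> b = \<one>" using inv_facts[OF w] unfolding b_def by auto
  have h': "v \<oplus> a = w \<oplus> b" using h unfolding psi_def a_def b_def .
  have e1: "(v \<oplus> a) \<oplus> (a \<oplus> w) = v \<oplus> w \<oplus> (a \<oplus> a)" using v w a by algebra
  have e2: "(w \<oplus> b) \<oplus> (a \<oplus> w) = a \<oplus> b \<oplus> (w \<oplus> w)" using w a b by algebra
  have vw: "v \<oplus> w = a \<oplus> b" using e1 e2 h' v w a b by simp
  have e3: "v \<otimes> w \<otimes> (a \<oplus> b) = (v \<otimes> a) \<otimes> w \<oplus> v \<otimes> (w \<otimes> b)" using v(1) w(1) a(1) b(1) by algebra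
  have e4: "(v \<oplus> w) \<otimes> (v \<otimes> w \<oplus> \<one>) = v \<otimes> w \<otimes> (v \<oplus> w) \<oplus> (v \<oplus> w)" using v w by algebra
  have "(v \<oplus> w) \<otimes> (v \<otimes> w \<oplus> \<one>) = v \<otimes> w \<otimes> (a \<oplus> b) \<oplus> (a \<oplus> b)"
    using e4 by (simp only: vw)
  also have "v \<otimes> w \<otimes> (a \<oplus> b) = w \<oplus> v" using e3 by (simp only: a(2) b(2) l_one r_one w(1) v(1))
  also have "a \<oplus> b = w \<oplus> v" using vw v w by (simp add: a_comm)
  also have "(w \<oplus> v) \<oplus> (w \<oplus> v) = \<zero>" using v w by simp
  finally have "v \<oplus> w = \<zero> \<or> v \<otimes> w \<oplus> \<one> = \<zero>" using v w by (simp add: integral_iff)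
  thus ?thesis
  proof
    assume "v \<oplus> w = \<zero>" thus ?thesis using add_eq_zero_iff v w by simp
  next
    assume "v \<otimes> w \<oplus> \<one> = \<zero>"
    hence "w \<otimes> v = \<one>" using add_eq_zero_iff v w by (simp add: m_comm)
    hence "inv w = v" using v w by (simp add: comm_inv_char)
    thus ?thesis by simp
  qed
qed

lemma psi_closed: "x \<in> carrier R \<Longrightarrow> x \<noteq> \<zero> \<Longrightarrow> psi x \<in> carrier R"
  unfolding psi_def using inv_facts by simp

lemma psi_inv: "x \<in> carrier R \<Longrightarrow> x \<noteq> \<zero> \<Longrightarrow> psi (inv x) = psi x"
proof -
  assume x: "x \<in> carrier R" "x \<noteq> \<zero>"
  have "inv (inv x) = x" using x inv_facts[OF x] by (simp add: comm_inv_char)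
  thus ?thesis unfolding psi_def using inv_facts[OF x] x by (simp add: a_comm)
qed

lemma psi_ne0: assumes x: "x \<in> carrier R" "x \<noteq> \<zero>" "x \<noteq> \<one>" shows "psi x \<noteq> \<zero>"
proof
  assume "psi x = \<zero>"
  hence "x = inv x" unfolding psi_def using add_eq_zero_iff inv_facts[OF x(1,2)] x by simp
  hence "x \<otimes> x = \<one>" using inv_facts[OF x(1,2)] by metis
  thus False using sq_one x by blast
qed

lemma inv_K: "x \<in> K \<Longrightarrow> x \<noteq> \<zero> \<Longrightarrow> inv x \<in> K"
  using subfield_m_inv(1)[OF K_subfield] by simp

lemma gamma_inv: "inv (gamma [^] (j::nat)) = (gamma [^] j) [^] q"
proof -
  have g: "gamma [^] j \<in> carrier R" using gamma_in by simp
  have "gamma [^] j \<otimes> (gamma [^] j) [^] q = \<one>"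
    using gamma_pow_q[of j] m_comm[OF nat_pow_closed[OF g] g, of q] by simp
  thus ?thesis using g by (simp add: comm_inv_char)
qed

lemma T_psi: "T j = psi (gamma [^] j)"
  unfolding T_def psi_def gamma_inv ..

lemma Kstar: "K - {\<zero>} = (\<lambda>a. beta [^] a) ` {..<s}"
proof
  show "K - {\<zero>} \<subseteq> (\<lambda>a. beta [^] a) ` {..<s}" using K_beta by blast
  show "(\<lambda>a. beta [^] a) ` {..<s} \<subseteq> K - {\<zero>}" using beta_K beta_in pow_nonzero by auto
qed

lemma card_Kstar: "card (K - {\<zero>}) = s"
proof -
  have "inj_on (\<lambda>a. beta [^] a) {..<s}"
    by (rule inj_onI) (simp add: beta_eq)
  thus ?thesis unfolding Kstar by (simp add: card_image)
qed

lemma card_G: "card ((\<lambda>j. gamma [^] j) ` {..<t}) = t"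
proof -
  have "inj_on (\<lambda>j. gamma [^] j) {..<t}"
    by (rule inj_onI) (simp add: gamma_eq)
  thus ?thesis by (simp add: card_image)
qed

lemma surj_psi: assumes c: "c \<in> K" "c \<noteq> \<zero>"
  shows "(\<exists>z\<in>K. z \<noteq> \<zero> \<and> psi z = c) \<or> (\<exists>j<t. T j = c)"
proof -
  define G where "G = (\<lambda>j. gamma [^] j) ` {..<t}"
  define A where "A = (K - {\<zero>} - {\<one>}) \<union> (G - {\<one>})"
  have one_K: "\<one> \<in> K - {\<zero>}" unfolding K_def2 by simp
  have one_G: "\<one> \<in> G" unfolding G_def using t_s by (force intro: image_eqI[of _ _ 0])
  have finK: "finite (K - {\<zero>})" unfolding Kstar by simp
  have finG: "finite G" unfolding G_def by simp
  have disj: "(K - {\<zero>} - {\<one>}) \<inter> (G - {\<one>}) = {}"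
    unfolding G_def using gamma_K by auto
  have cA: "card A = 2 * s"
  proof -
    have "card A = card (K - {\<zero>} - {\<one>}) + card (G - {\<one>})"
      unfolding A_def using disj finK finG by (simp add: card_Un_disjoint)
    also have "\<dots> = (s - 1) + (t - 1)"
      using one_K one_G finK finG card_Kstar card_G unfolding G_def by (simp add: card_Diff_singleton)
    finally show ?thesis using t_s s_pos by simp
  qed
  have Acar: "\<And>x. x \<in> A \<Longrightarrow> x \<in> carrier R \<and> x \<noteq> \<zero> \<and> x \<noteq> \<one>"
    unfolding A_def G_def using K_sub gamma_in pow_nonzero by auto
  have sub: "psi ` A \<subseteq> K - {\<zero>}"
  proof
    fix y assume "y \<in> psi ` A"
    then obtain x where x: "x \<in> A" "y = psi x" by blast
    have xc: "x \<in> carrier R" "x \<noteq> \<zero>" "x \<noteq> \<one>" using Acar[OF x(1)] by auto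
    have "psi x \<in> K"
    proof (cases "x \<in> K")
      case True thus ?thesis unfolding psi_def using K_add inv_K xc by simp
    next
      case False
      hence "x \<in> G" using x(1) unfolding A_def by auto
      then obtain j :: nat where "x = gamma [^] j" unfolding G_def by blast
      thus ?thesis using T_K T_psi by simp
    qed
    thus "y \<in> K - {\<zero>}" using psi_ne0[OF xc] x by simp
  qed
  have "card A \<le> 2 * card (psi ` A)"
  proof (rule card_fib2[where g = "\<lambda>x. inv x"])
    show "finite A" unfolding A_def using finK finG by simp
    fix x y assume "x \<in> A" "y \<in> A" "psi x = psi y"
    thus "y = x \<or> y = inv x" using psi_fib Acar by metis
  qed
  hence "s \<le> card (psi ` A)" using cA by simp
  hence "card (psi ` A) = card (K - {\<zero>})"
    using card_mono[OF finK sub] card_Kstar by simp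
  hence eq: "psi ` A = K - {\<zero>}" using card_subset_eq[OF finK sub] by simp
  then obtain x where x: "x \<in> A" "psi x = c" using c by (metis DiffI empty_iff image_iff insert_iff)
  show ?thesis
  proof (cases "x \<in> K")
    case True thus ?thesis using x Acar by blast
  next
    case False
    hence "x \<in> G" using x(1) unfolding A_def by auto
    then obtain j :: nat where j: "j < t" "x = gamma [^] j" unfolding G_def by blast
    thus ?thesis using x T_psi by blast
  qed
qed


lemma eval_f: assumes c: "c \<in> carrier R" and w: "w \<in> carrier R"
  shows "eval [\<one>, c, \<one>] w = w \<otimes> w \<oplus> c \<otimes> w \<oplus> \<one>"
  using c w by (simp add: numeral_2_eq_2 a_assoc)

lemma root_psi: assumes c: "c \<in> carrier R" and w: "w \<in> carrier R"
  shows "eval [\<one>, c, \<one>] w = \<zero> \<longleftrightarrow> w \<noteq> \<zero> \<and> psi w = c"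
proof (cases "w = \<zero>")
  case True thus ?thesis using c by (simp add: eval_f)
next
  case False
  have i: "inv w \<in> carrier R" "w \<otimes> inv w = \<one>" using inv_facts[OF w False] by auto
  have "w \<otimes> (psi w \<oplus> c) = w \<otimes> w \<oplus> w \<otimes> inv w \<oplus> c \<otimes> w"
    unfolding psi_def using w i(1) c by algebra
  also have "\<dots> = w \<otimes> w \<oplus> c \<otimes> w \<oplus> \<one>" using i(2) w c by (simp add: a_ac)
  finally have e: "eval [\<one>, c, \<one>] w = w \<otimes> (psi w \<oplus> c)" using c w by (simp add: eval_f a_assoc)
  have pc: "psi w \<in> carrier R" using psi_closed[OF w False] .
  show ?thesis unfolding e using False w pc c by (simp add: integral_iff add_eq_zero_iff)
qed

lemma fK: assumes "c \<in> K" shows "[\<one>, c, \<one>] \<in> carrier (K[X])"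
proof -
  have "\<one> \<in> K" unfolding K_def2 by simp
  thus ?thesis using assms unfolding univ_poly_carrier[symmetric] polynomial_def by simp
qed

lemma irr_noroot: assumes c: "c \<in> K" and I: "pirreducible K [\<one>, c, \<one>]" and z: "z \<in> K"
  shows "eval [\<one>, c, \<one>] z \<noteq> \<zero>"
proof
  assume ev: "eval [\<one>, c, \<one>] z = \<zero>"
  have sr: "subring K R" using subfieldE(1)[OF K_subfield] .
  interpret S: field "R\<lparr>carrier := K\<rparr>" using subfield_iff(2)[OF K_subfield] .
  have U: "univ_poly (R\<lparr>carrier := K\<rparr>) (carrier (R\<lparr>carrier := K\<rparr>)) = K[X]"
    using univ_poly_consistent[OF sr] by simp
  have P: "[\<one>\<^bsub>R\<lparr>carrier := K\<rparr>\<^esub>, c, \<one>\<^bsub>R\<lparr>carrier := K\<rparr>\<^esub>] \<in> carrier (poly_ring (R\<lparr>carrier := K\<rparr>))"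
    using U fK[OF c] by simp
  have I2: "pirreducible\<^bsub>R\<lparr>carrier := K\<rparr>\<^esub> (carrier (R\<lparr>carrier := K\<rparr>)) [\<one>\<^bsub>R\<lparr>carrier := K\<rparr>\<^esub>, c, \<one>\<^bsub>R\<lparr>carrier := K\<rparr>\<^esub>]"
    using U I by simp
  have "S.roots [\<one>\<^bsub>R\<lparr>carrier := K\<rparr>\<^esub>, c, \<one>\<^bsub>R\<lparr>carrier := K\<rparr>\<^esub>] = {#}"
    by (rule S.pirreducible_roots[OF P I2]) simp
  moreover have "S.is_root [\<one>\<^bsub>R\<lparr>carrier := K\<rparr>\<^esub>, c, \<one>\<^bsub>R\<lparr>carrier := K\<rparr>\<^esub>] z"
    unfolding S.is_root_def using z ev eval_consistent[OF sr] by simp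
  ultimately show False using S.roots_mem_iff_is_root[OF P] by simp
qed

lemma noroot_irr: assumes c: "c \<in> K" and nr: "\<And>z. z \<in> K \<Longrightarrow> eval [\<one>, c, \<one>] z \<noteq> \<zero>"
  shows "pirreducible K [\<one>, c, \<one>]"
proof (rule pirreducibleI[OF subfieldE(1)[OF K_subfield] fK[OF c]])
  show "[\<one>, c, \<one>] \<noteq> []" by simp
  show "[\<one>, c, \<one>] \<notin> Units (K[X])" using univ_poly_units'[OF K_subfield] by simp
  fix p r assume p: "p \<in> carrier (K[X])" and r: "r \<in> carrier (K[X])"
    and e: "[\<one>, c, \<one>] = p \<otimes>\<^bsub>K[X]\<^esub> r"
  show "p \<in> Units (K[X]) \<or> r \<in> Units (K[X])"
  proof (rule ccontr)
    assume "\<not> (p \<in> Units (K[X]) \<or> r \<in> Units (K[X]))"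
    hence nu: "p \<notin> Units (K[X])" "r \<notin> Units (K[X])" by auto
    have sr: "subring K R" using subfieldE(1)[OF K_subfield] .
    have pp: "polynomial K p" "polynomial K r" using p r univ_poly_carrier by auto
    have e': "[\<one>, c, \<one>] = poly_mult p r" using e by (simp add: univ_poly_mult)
    have "degree (poly_mult p r) = (if p = [] \<or> r = [] then 0 else degree p + degree r)"
      by (rule poly_mult_degree_eq[OF sr pp])
    hence d: "p \<noteq> []" "r \<noteq> []" "degree p + degree r = 2" unfolding e'[symmetric] by (auto split: if_splits)
    have "degree p \<noteq> 0" using nu(1) p d(1) univ_poly_units'[OF K_subfield] by auto
    moreover have "degree r \<noteq> 0" using nu(2) r d(2) univ_poly_units'[OF K_subfield] by auto
    ultimately have dp: "degree p = 1" using d(3) by linarith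
    define y where "y = inv (lead_coeff p) \<otimes> const_term p"
    have ev: "eval p (\<ominus> y) = \<zero>" and yK: "y \<in> K" unfolding y_def
      using degree_one_root[OF K_subfield p dp] by auto
    have xK: "\<ominus> y \<in> K" using subringE(5)[OF sr yK] .
    have xc: "\<ominus> y \<in> carrier R" using xK K_sub by auto
    have sets: "set p \<subseteq> carrier R" "set r \<subseteq> carrier R"
      using pp K_sub unfolding polynomial_def by auto
    have "eval [\<one>, c, \<one>] (\<ominus> y) = eval p (\<ominus> y) \<otimes> eval r (\<ominus> y)"
      unfolding e' by (rule eval_poly_mult[OF sets xc])
    also have "\<dots> = \<zero>" using ev eval_in_carrier[OF sets(2) xc] by simp
    finally show False using nr[OF xK] by simp
  qed
qed


lemma T0: "T 0 = \<zero>" unfolding T_def by simp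

lemma T_one: "gamma [^] (j::nat) = \<one> \<Longrightarrow> T j = \<zero>" unfolding T_def by simp

lemma main_loc: fixes e :: nat
  shows "((\<exists>j<t. T j = beta [^] e) \<longleftrightarrow> pirreducible K [\<one>, beta [^] e, \<one>])
    \<and> ((\<exists>j<t. T j = beta [^] e) \<longrightarrow>
         card {j. j < t \<and> T j = beta [^] e} = 2 \<and> (\<exists>j0<t. {j. j < t \<and> T j = beta [^] e} = {j0, (t - j0) mod t}))"
proof -
  define c where "c = beta [^] e"
  have cK: "c \<in> K" unfolding c_def by (rule beta_K)
  have cc: "c \<in> carrier R" "c \<noteq> \<zero>" unfolding c_def using beta_in pow_nonzero by auto
  have gc: "\<And>j::nat. gamma [^] j \<in> carrier R \<and> gamma [^] j \<noteq> \<zero>" using gamma_in pow_nonzero by auto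
  have nr: "(\<exists>j<t. T j = c) \<longleftrightarrow> \<not> (\<exists>z\<in>K. eval [\<one>, c, \<one>] z = \<zero>)"
  proof
    assume "\<exists>j<t. T j = c"
    then obtain j where j: "j < t" "T j = c" by blast
    show "\<not> (\<exists>z\<in>K. eval [\<one>, c, \<one>] z = \<zero>)"
    proof
      assume "\<exists>z\<in>K. eval [\<one>, c, \<one>] z = \<zero>"
      then obtain z where z: "z \<in> K" "eval [\<one>, c, \<one>] z = \<zero>" by blast
      have zc: "z \<in> carrier R" using z K_sub by auto
      have z2: "z \<noteq> \<zero>" "psi z = c" using z(2) root_psi[OF cc(1) zc] by auto
      have "psi (gamma [^] j) = psi z" using j(2) z2 T_psi by simp
      hence "gamma [^] j = z \<or> gamma [^] j = inv z" using psi_fib gc zc z2(1) by blast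
      hence "gamma [^] j \<in> K" using z(1) inv_K z2(1) by auto
      hence "T j = \<zero>" using gamma_K T_one by simp
      thus False using j cc by simp
    qed
  next
    assume h: "\<not> (\<exists>z\<in>K. eval [\<one>, c, \<one>] z = \<zero>)"
    have "\<not> (\<exists>z\<in>K. z \<noteq> \<zero> \<and> psi z = c)"
    proof
      assume "\<exists>z\<in>K. z \<noteq> \<zero> \<and> psi z = c"
      then obtain z where z: "z \<in> K" "z \<noteq> \<zero>" "psi z = c" by blast
      have zc: "z \<in> carrier R" using z K_sub by auto
      thus False using h z root_psi[OF cc(1) zc] by blast
    qed
    thus "\<exists>j<t. T j = c" using surj_psi[OF cK cc(2)] by blast
  qed
  have irr: "pirreducible K [\<one>, c, \<one>] \<longleftrightarrow> \<not> (\<exists>z\<in>K. eval [\<one>, c, \<one>] z = \<zero>)"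
    using irr_noroot[OF cK] noroot_irr[OF cK] by blast
  have part2: "card {j. j < t \<and> T j = c} = 2 \<and> (\<exists>j0<t. {j. j < t \<and> T j = c} = {j0, (t - j0) mod t})"
    if "\<exists>j<t. T j = c"
  proof -
    from that obtain j0 where j0: "j0 < t" "T j0 = c" by blast
    have j0pos: "j0 \<noteq> 0"
    proof
      assume "j0 = 0"
      hence "T j0 = \<zero>" using T0 by simp
      thus False using j0(2) cc(2) by simp
    qed
    have tj: "t - j0 < t" "(t - j0) mod t = t - j0" using j0pos j0 by auto
    have g0: "gamma [^] j0 \<in> carrier R" "gamma [^] j0 \<noteq> \<zero>" using gc by auto
    have "gamma [^] j0 \<otimes> gamma [^] (t - j0) = gamma [^] t" using j0 gamma_in by (simp add: nat_pow_mult)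
    hence ginv: "inv (gamma [^] j0) = gamma [^] (t - j0)" using g0 gamma_in gamma_t by (simp add: comm_inv_char)
    have T2: "T (t - j0) = c" using j0(2) unfolding T_psi ginv[symmetric] using psi_inv[OF g0] by simp
    have S: "{j. j < t \<and> T j = c} = {j0, t - j0}"
    proof
      show "{j0, t - j0} \<subseteq> {j. j < t \<and> T j = c}" using j0 T2 tj by auto
      show "{j. j < t \<and> T j = c} \<subseteq> {j0, t - j0}"
      proof
        fix j assume "j \<in> {j. j < t \<and> T j = c}"
        hence j: "j < t" "T j = c" by auto
        have "psi (gamma [^] j) = psi (gamma [^] j0)" using j j0 T_psi by simp
        hence "gamma [^] j = gamma [^] j0 \<or> gamma [^] j = inv (gamma [^] j0)"
          using psi_fib gc by blast
        hence "gamma [^] j = gamma [^] j0 \<or> gamma [^] j = gamma [^] (t - j0)" using ginv by simp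
        hence "j mod t = j0 mod t \<or> j mod t = (t - j0) mod t" unfolding gamma_eq .
        thus "j \<in> {j0, t - j0}" using j(1) j0(1) tj by auto
      qed
    qed
    have ne: "j0 \<noteq> t - j0" using t_odd j0 by presburger
    show ?thesis unfolding S using ne j0(1) tj by auto
  qed
  show ?thesis using nr irr part2 unfolding c_def by blast
qed

lemma db_eq: "DB_shift R m beta i k = abs_trace R m (beta [^] k \<otimes> beta [^] (nat (i mod int s)))"
proof -
  have "beta [^] (i + int k) = beta [^] (nat ((i + int k) mod int s))"
    by (rule int_pow_red[OF beta_in(1) beta_s])
  also have "\<dots> = beta [^] (k + nat (i mod int s))"
  proof -
    have "int ((k + nat (i mod int s)) mod s) = (int k + i mod int s) mod int s"
      using s_pos by (simp add: of_nat_mod)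
    also have "\<dots> = (i + int k) mod int s" by (simp add: mod_add_right_eq add.commute)
    finally have "(k + nat (i mod int s)) mod s = nat ((i + int k) mod int s)" by linarith
    moreover have "nat ((i + int k) mod int s) mod s = nat ((i + int k) mod int s)"
      using s_pos by (simp add: nat_less_iff)
    ultimately show ?thesis unfolding beta_eq by simp
  qed
  also have "\<dots> = beta [^] k \<otimes> beta [^] (nat (i mod int s))" using beta_in by (simp add: nat_pow_mult)
  finally show ?thesis unfolding DB_shift_def by simp
qed

lemma beta_int: "beta [^] i = beta [^] (nat (i mod int s))"
  by (rule int_pow_red[OF beta_in(1) beta_s])

end

theorem mainTheorem6:
  fixes R (structure) and m n s t :: nat and \<alpha> \<beta> \<gamma> :: 'a and i :: int
  assumes "field R" and "finite (carrier R)"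
    and "m \<ge> 1" and "n = 2 * m" and "s = 2 ^ m - 1" and "t = 2 ^ m + 1"
    and "card (carrier R) = 2 ^ n"
    and "mult_generator R \<alpha>"
    and "\<beta> = \<alpha> [^] t" and "\<gamma> = \<alpha> [^] s"
  shows "((\<exists>j<t. \<forall>k<s. torus_column R n \<beta> \<gamma> j k = DB_shift R m \<beta> i k)
            \<longleftrightarrow> pirreducible (subfield_pow R m) [\<one>, \<beta> [^] i, \<one>])
       \<and> ((\<exists>j<t. \<forall>k<s. torus_column R n \<beta> \<gamma> j k = DB_shift R m \<beta> i k) \<longrightarrow>
            {j. j < t \<and> (\<forall>k<s. torus_column R n \<beta> \<gamma> j k = DB_shift R m \<beta> i k)}
              = {j. j < t \<and> rel_trace R m (\<gamma> [^] j) = \<beta> [^] i}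
          \<and> card {j. j < t \<and> (\<forall>k<s. torus_column R n \<beta> \<gamma> j k = DB_shift R m \<beta> i k)} = 2
          \<and> (\<exists>j0<t. {j. j < t \<and> (\<forall>k<s. torus_column R n \<beta> \<gamma> j k = DB_shift R m \<beta> i k)}
                     = {j0, (t - j0) mod t}))"
  proof -
  have "dbt R m \<alpha>" unfolding dbt_def dbt_axioms_def using assms by simp
  then interpret D: dbt R m \<alpha> .
  have s: "s = D.s" using assms by (simp add: D.s_def D.q_def)
  have t: "t = D.t" using assms by (simp add: D.t_def D.q_def)
  have b: "\<beta> = D.beta" using assms t by (simp add: D.beta_def)
  have g: "\<gamma> = D.gamma" using assms s by (simp add: D.gamma_def)
  define e where "e = nat (i mod int D.s)"
  have col: "(\<forall>k<s. torus_column R n \<beta> \<gamma> j k = DB_shift R m \<beta> i k) \<longleftrightarrow> D.T j = D.beta [^] e" for j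
  proof -
    have "(\<forall>k<s. torus_column R n \<beta> \<gamma> j k = DB_shift R m \<beta> i k) \<longleftrightarrow>
      (\<forall>k<D.s. torus_column R (2*m) D.beta D.gamma j k = abs_trace R m (D.beta [^] k \<otimes> D.beta [^] e))"
      unfolding s b g e_def D.db_eq assms(4) ..
    also have "\<dots> \<longleftrightarrow> D.T j = D.beta [^] e" by (rule D.col_iff[OF D.beta_K])
    finally show ?thesis .
  qed
  have rel: "rel_trace R m (\<gamma> [^] j) = D.T j" for j :: nat
    unfolding rel_trace_def D.T_def D.q_def g ..
  have bi: "\<beta> [^] i = D.beta [^] e" unfolding b e_def by (rule D.beta_int)
  have sets: "{j. j < t \<and> (\<forall>k<s. torus_column R n \<beta> \<gamma> j k = DB_shift R m \<beta> i k)}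
      = {j. j < D.t \<and> D.T j = D.beta [^] e}" using col t by simp
  have sets2: "{j. j < t \<and> rel_trace R m (\<gamma> [^] j) = \<beta> [^] i} = {j. j < D.t \<and> D.T j = D.beta [^] e}"
    using rel bi t by simp
  have ex: "(\<exists>j<t. \<forall>k<s. torus_column R n \<beta> \<gamma> j k = DB_shift R m \<beta> i k) \<longleftrightarrow> (\<exists>j<D.t. D.T j = D.beta [^] e)"
    using col t by simp
  have irr: "pirreducible (subfield_pow R m) [\<one>, \<beta> [^] i, \<one>] \<longleftrightarrow> pirreducible D.K [\<one>, D.beta [^] e, \<one>]"
    unfolding bi D.K_def ..
  show ?thesis unfolding sets sets2 ex irr using D.main_loc[of e] t by simp
qed

end
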